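(* Let $k$ be a field, let $p\ge1$, and let $n_0<n_1<\cdots<n_p$ be positive integers with $n_i=n_0+id$ for a fixed positive integer $d$, such that $\gcd(n_0,\dots,n_p)=1$ and $\{n_0,\dots,n_p\}$ minimally generates the numerical semigroup $\langle n_0,\dots,n_p\rangle$. Let $S=\langle (0,n_p),(n_0,n_p-n_0),(n_1,n_p-n_1),\dots,(n_{p-1},n_p-n_{p-1}),(n_p,0)\rangle\subseteq\mathbb{N}^2$. Then \[e_{\mathrm{HK}}(k[S])=n_0+\frac{p(p+1)d^2}{2n_p}.\]
   Context: $k[S]=\bigoplus_{(s_1,s_2)\in S}k\,t^{s_1}u^{s_2}\subseteq k[t,u]$ is the semigroup ring of $S$, a graded $k$-algebra of dimension $2$ with homogeneous maximal ideal $\mathfrak{m}$ generated by the monomials $t^{s_1}u^{s_2}$ for the listed generators $(s_1,s_2)$ of $S$. For a $D$-dimensional graded $k$-algebra $R$ with homogeneous maximal ideal $\mathfrak{m}=\langle x_1,\dots,x_s\rangle$, set $\mathfrak{m}^{[n]}=\langle x_1^n,\dots,x_s^n\rangle$; the Hilbert–Kunz multiplicity is $e_{\mathrm{HK}}(R)=\lim_{n\to\infty}\ell_R(R/\mathfrak{m}^{[n]})/n^{D}$ (in positive characteristic $q$, taken along $n=q^e$). *)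

theory Defs
  imports Complex_Main
begin

definition num_sg :: "nat set \<Rightarrow> nat set" where
  "num_sg A = {x. \<exists>c::nat \<Rightarrow> nat. x = (\<Sum>a\<in>A. c a * a)}"

definition minimally_generates :: "nat set \<Rightarrow> bool" where
  "minimally_generates A \<longleftrightarrow> (\<forall>a\<in>A. a \<notin> num_sg (A - {a}))"

definition aff_sg :: "(nat \<times> nat) set \<Rightarrow> (nat \<times> nat) set" where
  "aff_sg G = {x. \<exists>c::nat \<times> nat \<Rightarrow> nat.
      x = ((\<Sum>g\<in>G. c g * fst g), (\<Sum>g\<in>G. c g * snd g))}"

text \<open>Length of k[S]/m^[n], where m is generated by the monomials t^a u^b for
  (a,b) in G and S = aff_sg G: since m^[n] is a monomial ideal, this length is the
  k-dimension of the quotient, i.e. the number of elements of S not lying in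
  any translate n*g + S (g in G). It does not depend on the field k.\<close>
definition hk_length :: "(nat \<times> nat) set \<Rightarrow> nat \<Rightarrow> nat" where
  "hk_length G n = card {s \<in> aff_sg G. \<forall>g\<in>G. \<forall>t\<in>aff_sg G.
      s \<noteq> (n * fst g + fst t, n * snd g + snd t)}"

definition has_eHK2 :: "(nat \<times> nat) set \<Rightarrow> real \<Rightarrow> bool" where
  "has_eHK2 G L \<longleftrightarrow> (\<lambda>n. real (hk_length G n) / real n ^ 2) \<longlonglongrightarrow> L"

end

theory Submission
  imports Defs "HOL-Number_Theory.Cong"
begin

lemma rep_coprime:
  fixes u v y :: nat
  assumes cop: "coprime u v" and v: "0 < v" and y: "u * v \<le> y"
  shows "\<exists>a b. a < v \<and> y = a * u + b * v"
proof -
  obtain w where w: "[u * w = Suc 0] (mod v)" using cong_solve_coprime_nat[OF cop] by blast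
  define a where "a = (w * y) mod v"
  have av: "a < v" using v by (simp add: a_def)
  have c1: "[a * u = w * y * u] (mod v)" unfolding a_def cong_def by (rule mod_mult_left_eq)
  have c2: "[w * y * u = y * (u * w)] (mod v)" by (simp add: ac_simps)
  have c3: "[y * (u * w) = y * Suc 0] (mod v)" using cong_scalar_left[OF w, of y] by simp
  have c: "[a * u = y] (mod v)" using cong_trans[OF cong_trans[OF c1 c2] c3] by simp
  have "a * u \<le> v * u" using av by simp
  hence le: "a * u \<le> y" using y by (metis mult.commute le_trans)
  have "[y = a * u] (mod v)" using c by (simp add: cong_sym)
  then obtain q where "y = q * v + a * u" using cong_le_nat[OF le] by blast
  thus ?thesis using av by auto
qed

locale hkl =
  fixes n0 d p :: nat
  assumes p1: "p \<ge> 1" and n0pos: "n0 > 0" and dpos: "d > 0" and cop: "coprime n0 d"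
begin

definition "NN = n0 + p * d"
definition "GG = insert (0, NN) ((\<lambda>i. (n0 + i * d, NN - (n0 + i * d))) ` {0..p})"
definition "Sp = {(x, y). \<exists>j m a. m \<le> j * p \<and> x = j * n0 + m * d \<and> y = a * NN + (j * p - m) * d}"
definition "TT = {x. \<exists>j m. m \<le> j * p \<and> x = j * n0 + m * d}"
definition "UU = {y. \<exists>a b. y = a * NN + b * d}"

lemma NNpos: "NN > 0" using n0pos by (simp add: NN_def)

lemma Sp_add: assumes "(x1, y1) \<in> Sp" "(x2, y2) \<in> Sp" shows "(x1 + x2, y1 + y2) \<in> Sp"
proof -
  obtain j1 m1 a1 where 1: "m1 \<le> j1 * p" "x1 = j1 * n0 + m1 * d" "y1 = a1 * NN + (j1 * p - m1) * d"
    using assms(1) unfolding Sp_def by blast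
  obtain j2 m2 a2 where 2: "m2 \<le> j2 * p" "x2 = j2 * n0 + m2 * d" "y2 = a2 * NN + (j2 * p - m2) * d"
    using assms(2) unfolding Sp_def by blast
  have "(j1 * p - m1) + (j2 * p - m2) = (j1 + j2) * p - (m1 + m2)" using 1 2 by (simp add: algebra_simps)
  hence "(j1 * p - m1) * d + (j2 * p - m2) * d = ((j1 + j2) * p - (m1 + m2)) * d"
    by (simp only: add_mult_distrib[symmetric])
  hence "y1 + y2 = (a1 + a2) * NN + ((j1 + j2) * p - (m1 + m2)) * d"
    using 1 2 by (simp add: add_mult_distrib)
  moreover have "x1 + x2 = (j1 + j2) * n0 + (m1 + m2) * d" using 1 2 by (simp add: algebra_simps)
  moreover have "m1 + m2 \<le> (j1 + j2) * p" using 1 2 by (simp add: algebra_simps)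
  ultimately show ?thesis unfolding Sp_def by blast
qed

lemma Sp_zero: "(0, 0) \<in> Sp" unfolding Sp_def by force

lemma Sp_smult: assumes "(x, y) \<in> Sp" shows "(k * x, k * y) \<in> Sp"
proof (induction k)
  case 0 then show ?case using Sp_zero by simp
next
  case (Suc k) then show ?case using Sp_add[OF assms Suc] by simp
qed

lemma GG_Sp: "GG \<subseteq> Sp"
proof
  fix g assume "g \<in> GG"
  then consider "g = (0, NN)" | i where "i \<le> p" "g = (n0 + i * d, NN - (n0 + i * d))"
    unfolding GG_def by auto
  then show "g \<in> Sp"
  proof cases
    case 1
    have "0 = 0 * n0 + 0 * d \<and> NN = 1 * NN + (0 * p - 0) * d" by simp
    then show ?thesis unfolding Sp_def 1
      by (simp only: mem_Collect_eq case_prod_conv) (rule exI[of _ 0], rule exI[of _ 0], rule exI[of _ 1], simp)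
  next
    case 2
    have "NN - (n0 + i * d) = 0 * NN + (1 * p - i) * d" using 2 by (simp add: NN_def diff_mult_distrib)
    moreover have "i \<le> 1 * p" using 2 by simp
    ultimately show ?thesis unfolding Sp_def 2
      by (simp only: mem_Collect_eq case_prod_conv) (rule exI[of _ 1], rule exI[of _ i], rule exI[of _ 0], simp)
  qed
qed

lemma finite_GG: "finite GG" unfolding GG_def by simp

lemma sum_in_Sp: "finite H \<Longrightarrow> H \<subseteq> Sp \<Longrightarrow>
   ((\<Sum>g\<in>H. c g * fst g), (\<Sum>g\<in>H. c g * snd g)) \<in> Sp"
proof (induction H rule: finite_induct)
  case empty then show ?case using Sp_zero by simp
next
  case (insert g H)
  have "g \<in> Sp" using insert by auto
  then have "(c g * fst g, c g * snd g) \<in> Sp" using Sp_smult[of "fst g" "snd g"] by simp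
  then show ?case using Sp_add insert by simp
qed

lemma aff_add: assumes "s1 \<in> aff_sg GG" "s2 \<in> aff_sg GG"
  shows "(fst s1 + fst s2, snd s1 + snd s2) \<in> aff_sg GG"
proof -
  obtain c1 where 1: "s1 = ((\<Sum>g\<in>GG. c1 g * fst g), (\<Sum>g\<in>GG. c1 g * snd g))"
    using assms(1) unfolding aff_sg_def by blast
  obtain c2 where 2: "s2 = ((\<Sum>g\<in>GG. c2 g * fst g), (\<Sum>g\<in>GG. c2 g * snd g))"
    using assms(2) unfolding aff_sg_def by blast
  have "(fst s1 + fst s2, snd s1 + snd s2) =
     ((\<Sum>g\<in>GG. (c1 g + c2 g) * fst g), (\<Sum>g\<in>GG. (c1 g + c2 g) * snd g))"
    using 1 2 by (simp add: sum.distrib distrib_right)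
  note eq = this
  show ?thesis unfolding aff_sg_def by (rule CollectI, rule exI[of _ "\<lambda>g. c1 g + c2 g"], rule eq)
qed

lemma aff_gen: assumes "g \<in> GG" shows "g \<in> aff_sg GG"
proof -
  define c :: "nat \<times> nat \<Rightarrow> nat" where "c = (\<lambda>h. if h = g then 1 else 0)"
  have "(\<Sum>h\<in>GG. c h * fst h) = (\<Sum>h\<in>GG. if h = g then fst h else 0)"
    by (rule sum.cong) (auto simp: c_def)
  also have "\<dots> = fst g" using assms finite_GG by (simp add: sum.delta)
  finally have 1: "(\<Sum>h\<in>GG. c h * fst h) = fst g" .
  have "(\<Sum>h\<in>GG. c h * snd h) = (\<Sum>h\<in>GG. if h = g then snd h else 0)"
    by (rule sum.cong) (auto simp: c_def)
  also have "\<dots> = snd g" using assms finite_GG by (simp add: sum.delta)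
  finally have 2: "(\<Sum>h\<in>GG. c h * snd h) = snd g" .
  have eq: "g = ((\<Sum>h\<in>GG. c h * fst h), (\<Sum>h\<in>GG. c h * snd h))" using 1 2 by simp
  show ?thesis unfolding aff_sg_def by (rule CollectI, rule exI[of _ c], rule eq)
qed

lemma aff_zero: "(0, 0) \<in> aff_sg GG"
proof -
  have eq: "(0::nat, 0::nat) = ((\<Sum>g\<in>GG. (\<lambda>_. 0) g * fst g), (\<Sum>g\<in>GG. (\<lambda>_. 0) g * snd g))" by simp
  show ?thesis unfolding aff_sg_def by (rule CollectI, rule exI[of _ "\<lambda>_. 0"], rule eq)
qed

lemma aff_j: "m \<le> j * p \<Longrightarrow> (j * n0 + m * d, (j * p - m) * d) \<in> aff_sg GG"
proof (induction j arbitrary: m)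
  case 0 then show ?case using aff_zero by simp
next
  case (Suc j)
  define i where "i = min m p"
  have ip: "i \<le> p" unfolding i_def by simp
  have m': "m - i \<le> j * p" using Suc.prems unfolding i_def by (auto simp: min_def)
  have A: "(j * n0 + (m - i) * d, (j * p - (m - i)) * d) \<in> aff_sg GG" using Suc.IH[OF m'] .
  have "(n0 + i * d, NN - (n0 + i * d)) \<in> GG" unfolding GG_def using ip by auto
  hence B: "(n0 + i * d, (p - i) * d) \<in> aff_sg GG" using aff_gen
    by (simp add: NN_def diff_mult_distrib)
  have "i \<le> m" unfolding i_def by simp
  have "(m - i) * d + i * d = m * d" using \<open>i \<le> m\<close>
    by (metis add_mult_distrib le_add_diff_inverse2)
  hence e1: "j * n0 + (m - i) * d + (n0 + i * d) = Suc j * n0 + m * d" by simp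
  have e2: "(j * p - (m - i)) * d + (p - i) * d = (Suc j * p - m) * d"
  proof -
    have "(j * p - (m - i)) + (p - i) = Suc j * p - m" using m' ip \<open>i \<le> m\<close> by simp
    thus ?thesis by (metis add_mult_distrib)
  qed
  show ?case using aff_add[OF A B] e1 e2 by simp
qed

lemma aff_a: "(0, a * NN) \<in> aff_sg GG"
proof (induction a)
  case 0 then show ?case using aff_zero by simp
next
  case (Suc a)
  have g: "(0, NN) \<in> aff_sg GG" using aff_gen unfolding GG_def by simp
  show ?case using aff_add[OF Suc g] by (simp add: add.commute)
qed

lemma aff_eq: "aff_sg GG = Sp"
proof
  show "aff_sg GG \<subseteq> Sp" unfolding aff_sg_def using sum_in_Sp[OF finite_GG GG_Sp] by blast
next
  show "Sp \<subseteq> aff_sg GG"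
  proof
    fix s assume "s \<in> Sp"
    then obtain j m a where "m \<le> j * p" "s = (j * n0 + m * d, a * NN + (j * p - m) * d)"
      unfolding Sp_def by blast
    then show "s \<in> aff_sg GG" using aff_add[OF aff_a[of a] aff_j[of m j]] by simp
  qed
qed

end

context hkl begin

lemma cop_NN: "coprime NN d"
proof -
  have "gcd d (p * d + n0) = gcd d n0" by (rule gcd_add_mult)
  also have "\<dots> = 1" using cop by (simp add: coprime_iff_gcd_eq_1 gcd.commute)
  finally show ?thesis unfolding NN_def by (simp add: coprime_iff_gcd_eq_1 gcd.commute add.commute)
qed

definition "c1 = n0 * (n0 + d)"
definition "c2 = NN * d"

lemma TT_cond: assumes "c1 \<le> x" shows "x \<in> TT"
proof -
  have "d * n0 \<le> x" using assms unfolding c1_def by (simp add: algebra_simps)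
  then obtain m j where mj: "m < n0" "x = m * d + j * n0"
    using rep_coprime[of d n0 x] cop n0pos by (auto simp: coprime_commute)
  have "m * d \<le> n0 * d" using mj by simp
  moreover have "n0 * n0 + n0 * d \<le> m * d + j * n0" using assms mj unfolding c1_def by (simp add: algebra_simps)
  ultimately have "n0 * n0 \<le> j * n0" by linarith
  hence "n0 \<le> j" using n0pos by simp
  hence "m \<le> j * p" using mj p1
    by (metis le_trans less_imp_le mult.right_neutral mult_le_mono2)
  thus ?thesis unfolding TT_def using mj by (auto simp: add.commute)
qed

lemma UU_cond: assumes "c2 \<le> y" shows "y \<in> UU"
proof -
  obtain a b where "y = a * NN + b * d"
    using rep_coprime[of NN d y] cop_NN dpos assms unfolding c2_def by auto
  thus ?thesis unfolding UU_def by blast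
qed

lemma Sp_char: "(x, y) \<in> Sp \<longleftrightarrow> x \<in> TT \<and> y \<in> UU \<and> NN dvd (x + y)"
proof
  assume "(x, y) \<in> Sp"
  then obtain j m a where h: "m \<le> j * p" "x = j * n0 + m * d" "y = a * NN + (j * p - m) * d"
    unfolding Sp_def by blast
  have "x \<in> TT" unfolding TT_def using h by blast
  moreover have "y \<in> UU" unfolding UU_def using h by blast
  moreover have "x + y = (j + a) * NN"
  proof -
    have "m * d + (j * p - m) * d = j * p * d" using h(1)
      by (metis add_mult_distrib le_add_diff_inverse)
    hence "x + y = j * n0 + j * p * d + a * NN" using h by simp
    moreover have "j * n0 + j * p * d = j * NN" unfolding NN_def by (simp add: algebra_simps)
    ultimately show ?thesis by (simp add: algebra_simps)
  qed
  ultimately show "x \<in> TT \<and> y \<in> UU \<and> NN dvd (x + y)" by simp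
next
  assume as: "x \<in> TT \<and> y \<in> UU \<and> NN dvd (x + y)"
  obtain j m where h1: "m \<le> j * p" "x = j * n0 + m * d" using as unfolding TT_def by blast
  obtain a b where h2: "y = a * NN + b * d" using as unfolding UU_def by blast
  obtain k where h3: "x + y = k * NN" using as by (metis dvdE mult.commute)
  note h = h1 h2 h3
  show "(x, y) \<in> Sp"
  proof (cases "j \<le> k")
    case True
    have "int y = int ((k - j) * NN + (j * p - m) * d)"
    proof -
      have "int y = int k * int NN - int x" using h(4) by (simp add: algebra_simps) (metis of_nat_add of_nat_mult add_diff_cancel_left')
      also have "\<dots> = (int k - int j) * int NN + (int j * int p - int m) * int d"
        using h(2) unfolding NN_def by (simp add: algebra_simps)
      also have "\<dots> = int ((k - j) * NN + (j * p - m) * d)"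
        using True h(1) by (simp add: of_nat_diff)
      finally show ?thesis .
    qed
    hence "y = (k - j) * NN + (j * p - m) * d" by (simp only: of_nat_eq_iff)
    thus ?thesis unfolding Sp_def using h by blast
  next
    case False
    have "a * NN \<le> k * NN" using h by (metis le_add1 le_add2 le_trans)
    hence ak: "a \<le> k" using NNpos by simp
    have key: "(int j - (int k - int a)) * int n0 = ((int k - int a) * int p - int b - int m) * int d"
    proof -
      have "int x + int y = int k * int NN" using h(4) by (metis of_nat_add of_nat_mult)
      thus ?thesis using h(2,3) unfolding NN_def by (simp add: algebra_simps)
    qed
    have "(int j - (int k - int a)) * int n0 > 0" using False n0pos ak by simp
    hence "((int k - int a) * int p - int b - int m) * int d > 0" using key by simp
    hence "(int k - int a) * int p - int b - int m > 0" using dpos by (simp add: zero_less_mult_iff)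
    hence bl: "int b < int (k - a) * int p" using ak by (simp add: of_nat_diff)
    hence bl': "b \<le> (k - a) * p" by (metis less_imp_le of_nat_less_iff of_nat_mult)
    have xe: "x = (k - a) * n0 + ((k - a) * p - b) * d"
    proof -
      have "int x = int k * int NN - int y" using h(4) by (metis add_diff_cancel_right' of_nat_add of_nat_mult)
      also have "\<dots> = (int k - int a) * int n0 + ((int k - int a) * int p - int b) * int d"
        using h(3) unfolding NN_def by (simp add: algebra_simps)
      also have "\<dots> = int ((k - a) * n0 + ((k - a) * p - b) * d)"
        by (simp only: of_nat_add of_nat_mult of_nat_diff[OF bl'] of_nat_diff[OF ak])
      finally show ?thesis by (simp only: of_nat_eq_iff)
    qed
    have ye: "y = a * NN + ((k - a) * p - ((k - a) * p - b)) * d" using h(3) bl' by simp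
    have "(k - a) * p - b \<le> (k - a) * p" by simp
    thus ?thesis unfolding Sp_def using xe ye by blast
  qed
qed

end

lemma mult_count:
  fixes N M :: nat assumes N: "0 < N"
  shows "M \<le> N * card {z. z < M \<and> N dvd z} \<and> N * card {z. z < M \<and> N dvd z} \<le> M + N - 1"
proof -
  define q where "q = (M + N - 1) div N"
  have eq: "{z. z < M \<and> N dvd z} = (\<lambda>t. t * N) ` {..<q}"
  proof
    show "{z. z < M \<and> N dvd z} \<subseteq> (\<lambda>t. t * N) ` {..<q}"
    proof
      fix z assume z: "z \<in> {z. z < M \<and> N dvd z}"
      then obtain t where t: "z = t * N" by (metis dvdE mult.commute mem_Collect_eq)
      have "Suc t * N \<le> M + N - 1" using z t by simp
      hence "Suc t \<le> q" unfolding q_def using less_eq_div_iff_mult_less_eq[OF N] by blast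
      thus "z \<in> (\<lambda>t. t * N) ` {..<q}" using t by auto
    qed
  next
    show "(\<lambda>t. t * N) ` {..<q} \<subseteq> {z. z < M \<and> N dvd z}"
    proof
      fix z assume "z \<in> (\<lambda>t. t * N) ` {..<q}"
      then obtain t where t: "t < q" "z = t * N" by auto
      have "Suc t * N \<le> M + N - 1" using t(1) unfolding q_def using less_eq_div_iff_mult_less_eq[OF N] by (metis Suc_leI)
      hence "z < M" using t N by simp
      thus "z \<in> {z. z < M \<and> N dvd z}" using t by simp
    qed
  qed
  have "inj_on (\<lambda>t. t * N) {..<q}" using N by (simp add: inj_on_def)
  hence c: "card {z. z < M \<and> N dvd z} = q" using eq by (simp add: card_image)
  have a: "q * N \<le> M + N - 1" unfolding q_def by (metis div_times_less_eq_dividend)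
  have "M + N - 1 < Suc q * N" unfolding q_def using div_less_iff_less_mult[OF N] by (metis lessI)
  hence b: "M \<le> q * N" using N by simp
  show ?thesis using a b c by (simp add: mult.commute)
qed

lemma col_count:
  fixes N :: nat assumes N: "0 < N"
  shows "real h - real N \<le> real N * real (card {y. y < h \<and> N dvd (x + y)})
      \<and> real N * real (card {y. y < h \<and> N dvd (x + y)}) \<le> real h + real N"
proof -
  have un: "{z. z < x + h \<and> N dvd z} = {z. z < x \<and> N dvd z} \<union> (\<lambda>y. x + y) ` {y. y < h \<and> N dvd (x + y)}"
  proof (rule set_eqI)
    fix z show "z \<in> {z. z < x + h \<and> N dvd z} \<longleftrightarrow> z \<in> {z. z < x \<and> N dvd z} \<union> (\<lambda>y. x + y) ` {y. y < h \<and> N dvd (x + y)}"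
    proof
      assume z: "z \<in> {z. z < x + h \<and> N dvd z}"
      show "z \<in> {z. z < x \<and> N dvd z} \<union> (\<lambda>y. x + y) ` {y. y < h \<and> N dvd (x + y)}"
      proof (cases "z < x")
        case True then show ?thesis using z by simp
      next
        case False
        hence "z = x + (z - x)" by simp
        moreover have "z - x \<in> {y. y < h \<and> N dvd (x + y)}" using z False by auto
        ultimately show ?thesis by blast
      qed
    qed auto
  qed
  have disj: "{z. z < x \<and> N dvd z} \<inter> (\<lambda>y. x + y) ` {y. y < h \<and> N dvd (x + y)} = {}" by auto
  have "card {z. z < x + h \<and> N dvd z} = card {z. z < x \<and> N dvd z} + card {y. y < h \<and> N dvd (x + y)}"
    unfolding un by (subst card_Un_disjoint) (auto simp: disj card_image)
  moreover note mult_count[OF N, of "x + h"] mult_count[OF N, of x]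
  ultimately have "x + h \<le> N * card {z. z < x \<and> N dvd z} + N * card {y. y < h \<and> N dvd (x + y)}"
    "N * card {z. z < x \<and> N dvd z} + N * card {y. y < h \<and> N dvd (x + y)} \<le> x + h + N - 1"
    "x \<le> N * card {z. z < x \<and> N dvd z}" "N * card {z. z < x \<and> N dvd z} \<le> x + N - 1"
    by (simp_all add: algebra_simps)
  hence "h + 1 \<le> N * card {y. y < h \<and> N dvd (x + y)} + N"
        "N * card {y. y < h \<and> N dvd (x + y)} \<le> h + N"
    using N by linarith+
  hence "real h + 1 \<le> real N * real (card {y. y < h \<and> N dvd (x + y)}) + real N"
        "real N * real (card {y. y < h \<and> N dvd (x + y)}) \<le> real h + real N"
    by (metis of_nat_add of_nat_mult of_nat_le_iff of_nat_1)+
  thus ?thesis by linarith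
qed

definition blk :: "nat \<Rightarrow> nat \<Rightarrow> nat \<Rightarrow> nat \<Rightarrow> (nat \<times> nat) set" where
  "blk N X0 X1 h = {(x, y). X0 \<le> x \<and> x < X1 \<and> y < h \<and> N dvd (x + y)}"

lemma blk_finite: "finite (blk N X0 X1 h)"
proof -
  have "blk N X0 X1 h \<subseteq> {..<X1} \<times> {..<h}" unfolding blk_def by auto
  thus ?thesis by (rule finite_subset) simp
qed

lemma blk_count:
  fixes N :: nat assumes N: "0 < N"
  shows "real (X1 - X0) * (real h - real N) \<le> real N * real (card (blk N X0 X1 h))
      \<and> real N * real (card (blk N X0 X1 h)) \<le> real (X1 - X0) * (real h + real N)"
proof -
  have "blk N X0 X1 h = Sigma {X0..<X1} (\<lambda>x. {y. y < h \<and> N dvd (x + y)})"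
    unfolding blk_def by auto
  moreover have "\<And>x. finite {y. y < h \<and> N dvd (x + y)}" by simp
  ultimately have c: "card (blk N X0 X1 h) = (\<Sum>x\<in>{X0..<X1}. card {y. y < h \<and> N dvd (x + y)})"
    by (simp add: card_SigmaI)
  have r: "real N * real (card (blk N X0 X1 h)) = (\<Sum>x\<in>{X0..<X1}. real N * real (card {y. y < h \<and> N dvd (x + y)}))"
    unfolding c by (simp add: sum_distrib_left)
  have u: "(\<Sum>x\<in>{X0..<X1}. real N * real (card {y. y < h \<and> N dvd (x + y)})) \<le> real (card {X0..<X1}) * (real h + real N)"
    by (rule sum_bounded_above) (use col_count[OF N] in blast)
  have l: "real (card {X0..<X1}) * (real h - real N) \<le> (\<Sum>x\<in>{X0..<X1}. real N * real (card {y. y < h \<and> N dvd (x + y)}))"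
    by (rule sum_bounded_below) (use col_count[OF N] in blast)
  show ?thesis using u l r by simp
qed

context hkl begin

definition "PP n c = {(x, y). x < n * NN + c \<and> y < n * NN + c \<and>
   (\<forall>i<p. x < n * (n0 + i * d) + c \<or> y < n * ((p - i) * d) + c) \<and> NN dvd (x + y)}"
definition "EE n = {s \<in> Sp. \<forall>g\<in>GG. \<forall>t\<in>Sp. s \<noteq> (n * fst g + fst t, n * snd g + snd t)}"
definition "cc = c1 + c2"

lemma hk_EE: "hk_length GG n = card (EE n)" unfolding hk_length_def EE_def aff_eq ..

lemma NN_sub: "i \<le> p \<Longrightarrow> NN - (n0 + i * d) = (p - i) * d"
  unfolding NN_def by (simp add: diff_mult_distrib)

lemma gen_i: "i \<le> p \<Longrightarrow> (n0 + i * d, (p - i) * d) \<in> GG"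
  unfolding GG_def using NN_sub by force

lemma gen_0: "(0, NN) \<in> GG" unfolding GG_def by simp

lemma PP_finite: "finite (PP n c)"
proof -
  have "PP n c \<subseteq> {..<n * NN + c} \<times> {..<n * NN + c}" unfolding PP_def by auto
  thus ?thesis by (rule finite_subset) simp
qed

lemma EE_sub: "EE n \<subseteq> PP n cc"
proof
  fix s assume s: "s \<in> EE n"
  obtain x y where xy: "s = (x, y)" by (cases s)
  have sS: "(x, y) \<in> Sp" and nE: "\<And>g t. g \<in> GG \<Longrightarrow> t \<in> Sp \<Longrightarrow> (x, y) \<noteq> (n * fst g + fst t, n * snd g + snd t)"
    using s unfolding EE_def xy by auto
  have xT: "x \<in> TT" and yU: "y \<in> UU" and dv: "NN dvd (x + y)" using sS Sp_char by auto
  have "x < n * NN + cc"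
  proof (rule ccontr)
    assume "\<not> x < n * NN + cc"
    hence h: "n * NN + cc \<le> x" by simp
    have "(x - n * NN, y) \<in> Sp" unfolding Sp_char
    proof (intro conjI)
      show "x - n * NN \<in> TT" using h by (intro TT_cond) (simp add: cc_def)
      show "y \<in> UU" by fact
      have "x - n * NN + y = (x + y) - n * NN" using h by simp
      thus "NN dvd (x - n * NN + y)" using dv by (simp add: dvd_diff_nat)
    qed
    moreover have "(NN, 0) \<in> GG" using gen_i[of p] unfolding NN_def by simp
    ultimately show False using nE[of "(NN, 0)" "(x - n * NN, y)"] h by simp
  qed
  moreover have "y < n * NN + cc"
  proof (rule ccontr)
    assume "\<not> y < n * NN + cc"
    hence h: "n * NN + cc \<le> y" by simp
    have "(x, y - n * NN) \<in> Sp" unfolding Sp_char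
    proof (intro conjI)
      show "y - n * NN \<in> UU" using h by (intro UU_cond) (simp add: cc_def)
      show "x \<in> TT" by fact
      have "x + (y - n * NN) = (x + y) - n * NN" using h by simp
      thus "NN dvd (x + (y - n * NN))" using dv by (simp add: dvd_diff_nat)
    qed
    thus False using nE[OF gen_0 \<open>(x, y - n * NN) \<in> Sp\<close>] h by simp
  qed
  moreover have "\<forall>i<p. x < n * (n0 + i * d) + cc \<or> y < n * ((p - i) * d) + cc"
  proof (intro allI impI)
    fix i assume ip: "i < p"
    show "x < n * (n0 + i * d) + cc \<or> y < n * ((p - i) * d) + cc"
    proof (rule ccontr)
      assume "\<not> (x < n * (n0 + i * d) + cc \<or> y < n * ((p - i) * d) + cc)"
      hence h1: "n * (n0 + i * d) + cc \<le> x" and h2: "n * ((p - i) * d) + cc \<le> y" by auto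
      have tS: "(x - n * (n0 + i * d), y - n * ((p - i) * d)) \<in> Sp" unfolding Sp_char
      proof (intro conjI)
        show "x - n * (n0 + i * d) \<in> TT" using h1 by (intro TT_cond) (simp add: cc_def)
        show "y - n * ((p - i) * d) \<in> UU" using h2 by (intro UU_cond) (simp add: cc_def)
        have "n * (n0 + i * d) + n * ((p - i) * d) = n * NN"
          using ip unfolding NN_def by (simp add: algebra_simps diff_mult_distrib2)
        hence "x - n * (n0 + i * d) + (y - n * ((p - i) * d)) = (x + y) - n * NN" using h1 h2 by simp
        thus "NN dvd (x - n * (n0 + i * d) + (y - n * ((p - i) * d)))" using dv by (simp add: dvd_diff_nat)
      qed
      show False using nE[OF gen_i[of i] tS] h1 h2 ip by simp
    qed
  qed
  ultimately show "s \<in> PP n cc" unfolding PP_def xy using dv by simp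
qed

lemma PP0_sub: "Sp \<inter> PP n 0 \<subseteq> EE n"
proof
  fix s assume s: "s \<in> Sp \<inter> PP n 0"
  obtain x y where xy: "s = (x, y)" by (cases s)
  have P: "x < n * NN" "y < n * NN" "\<And>i. i < p \<Longrightarrow> x < n * (n0 + i * d) \<or> y < n * ((p - i) * d)"
    using s unfolding xy PP_def by auto
  have "\<forall>g\<in>GG. \<forall>t\<in>Sp. (x, y) \<noteq> (n * fst g + fst t, n * snd g + snd t)"
  proof (intro ballI)
    fix g t assume g: "g \<in> GG" and t: "t \<in> Sp"
    from g consider "g = (0, NN)" | i where "i \<le> p" "g = (n0 + i * d, (p - i) * d)"
      unfolding GG_def using NN_sub by auto
    then show "(x, y) \<noteq> (n * fst g + fst t, n * snd g + snd t)"
    proof cases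
      case 1 then show ?thesis using P(2) by auto
    next
      case 2
      show ?thesis
      proof (cases "i = p")
        case True then show ?thesis using P(1) 2 unfolding NN_def by auto
      next
        case False
        hence "i < p" using 2 by simp
        then show ?thesis using P(3)[of i] 2 by auto
      qed
    qed
  qed
  thus "s \<in> EE n" using s unfolding EE_def xy by auto
qed

lemma PP0_big: "PP n 0 \<inter> {(x, y). c1 \<le> x \<and> c2 \<le> y} \<subseteq> Sp"
proof
  fix s assume s: "s \<in> PP n 0 \<inter> {(x, y). c1 \<le> x \<and> c2 \<le> y}"
  obtain x y where xy: "s = (x, y)" by (cases s)
  show "s \<in> Sp" unfolding xy Sp_char using s TT_cond UU_cond unfolding xy PP_def by auto
qed

lemma EE_finite: "finite (EE n)" using EE_sub PP_finite by (rule finite_subset)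

lemma EE_lower: "real (card (PP n 0)) - real ((c1 + c2) * (n * NN)) \<le> real (card (EE n))"
proof -
  define A where "A = PP n 0 \<inter> {(x, y). c1 \<le> x \<and> c2 \<le> y}"
  have "PP n 0 \<subseteq> A \<union> ({..<c1} \<times> {..<n * NN}) \<union> ({..<n * NN} \<times> {..<c2})"
    unfolding A_def PP_def by auto
  hence "card (PP n 0) \<le> card (A \<union> ({..<c1} \<times> {..<n * NN}) \<union> ({..<n * NN} \<times> {..<c2}))"
    using PP_finite unfolding A_def by (intro card_mono) auto
  also have "\<dots> \<le> card A + card ({..<c1} \<times> {..<n * NN}) + card ({..<n * NN} \<times> {..<c2})"
    by (metis (no_types, lifting) card_Un_le add_le_mono1 le_trans)
  also have "\<dots> = card A + c1 * (n * NN) + n * NN * c2" by (simp add: card_cartesian_product)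
  finally have 1: "card (PP n 0) \<le> card A + (c1 + c2) * (n * NN)" by (simp add: algebra_simps)
  have "A \<subseteq> EE n" using PP0_big PP0_sub unfolding A_def by blast
  hence "card A \<le> card (EE n)" using EE_finite by (rule card_mono[rotated])
  with 1 have "card (PP n 0) \<le> card (EE n) + (c1 + c2) * (n * NN)" by simp
  hence "real (card (PP n 0)) \<le> real (card (EE n)) + real ((c1 + c2) * (n * NN))"
    by (metis of_nat_add of_nat_le_iff)
  thus ?thesis by simp
qed

lemma EE_upper: "card (EE n) \<le> card (PP n cc)"
  using EE_sub PP_finite by (rule card_mono[rotated])

end

lemma sum_pi: "(\<Sum>i<q. real (q - i)) = real q * (real q + 1) / 2"
proof (induction q)
  case 0 then show ?case by simp
next
  case (Suc q)
  have "(\<Sum>i<Suc q. real (Suc q - i)) = (\<Sum>i<q. real (Suc q - i)) + 1" by simp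
  also have "(\<Sum>i<q. real (Suc q - i)) = (\<Sum>i<q. real (q - i) + 1)"
    by (rule sum.cong) (auto simp: Suc_diff_le)
  also have "\<dots> = (\<Sum>i<q. real (q - i)) + real q" by (simp add: sum.distrib)
  finally show ?case using Suc.IH by (simp add: field_simps)
qed

context hkl begin

definition "B0 n c = blk NN 0 (n * n0 + c) (n * NN + c)"
definition "Bi n c i = blk NN (n * (n0 + i * d) + c) (n * (n0 + Suc i * d) + c) (n * ((p - i) * d) + c)"

lemma mono_a: "a \<le> b \<Longrightarrow> n * (n0 + a * d) \<le> n * (n0 + b * d)"
  using mult_le_mono1[of a b d] by (intro mult_le_mono2) simp

lemma PP_blocks: "PP n c = B0 n c \<union> (\<Union>i<p. Bi n c i)"
proof (rule set_eqI)
  fix s :: "nat \<times> nat"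
  obtain x y where xy: "s = (x, y)" by (cases s)
  show "s \<in> PP n c \<longleftrightarrow> s \<in> B0 n c \<union> (\<Union>i<p. Bi n c i)"
  proof
    assume s: "s \<in> PP n c"
    have P: "x < n * NN + c" "y < n * NN + c" "\<And>i. i < p \<Longrightarrow> x < n * (n0 + i * d) + c \<or> y < n * ((p - i) * d) + c"
       "NN dvd (x + y)"
      using s unfolding xy PP_def by auto
    show "s \<in> B0 n c \<union> (\<Union>i<p. Bi n c i)"
    proof (cases "x < n * n0 + c")
      case True then show ?thesis using P unfolding xy B0_def blk_def by auto
    next
      case False
      define I where "I = {i. i < p \<and> n * (n0 + i * d) + c \<le> x}"
      have fI: "finite I" unfolding I_def by simp
      have "0 \<in> I" unfolding I_def using False p1 by simp
      hence neI: "I \<noteq> {}" by blast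
      define i where "i = Max I"
      have iI: "i \<in> I" unfolding i_def using fI neI by (rule Max_in)
      hence ip: "i < p" and xi: "n * (n0 + i * d) + c \<le> x" unfolding I_def by auto
      have xs: "x < n * (n0 + Suc i * d) + c"
      proof (cases "Suc i < p")
        case True
        have "Suc i \<notin> I"
        proof
          assume "Suc i \<in> I"
          from Max_ge[OF fI this] have "Suc i \<le> i" unfolding i_def .
          thus False by simp
        qed
        thus ?thesis using True unfolding I_def by auto
      next
        case False
        hence "Suc i = p" using ip by simp
        thus ?thesis using P(1) unfolding NN_def by simp
      qed
      have "y < n * ((p - i) * d) + c" using P(3)[OF ip] xi by simp
      hence "s \<in> Bi n c i" unfolding xy Bi_def blk_def using xi xs P(4) by simp
      thus ?thesis using ip by blast
    qed
  next
    assume s: "s \<in> B0 n c \<union> (\<Union>i<p. Bi n c i)"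
    show "s \<in> PP n c"
    proof (cases "s \<in> B0 n c")
      case True
      hence h: "x < n * n0 + c" "y < n * NN + c" "NN dvd (x + y)" unfolding xy B0_def blk_def by auto
      have "n * n0 \<le> n * NN" unfolding NN_def by simp
      hence "x < n * NN + c" using h by linarith
      moreover have "x < n * (n0 + i * d) + c" for i
      proof -
        have "n * n0 \<le> n * (n0 + i * d)" using mono_a[of 0 i n] by simp
        thus ?thesis using h by linarith
      qed
      ultimately show ?thesis unfolding xy PP_def using h by auto
    next
      case False
      then obtain i where ip: "i < p" and "s \<in> Bi n c i" using s by auto
      hence h: "n * (n0 + i * d) + c \<le> x" "x < n * (n0 + Suc i * d) + c" "y < n * ((p - i) * d) + c"
        "NN dvd (x + y)" unfolding xy Bi_def blk_def by auto
      have "n * (n0 + Suc i * d) \<le> n * NN" using mono_a[of "Suc i" p n] ip unfolding NN_def by simp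
      hence 1: "x < n * NN + c" using h by linarith
      have "(p - i) * d \<le> p * d" by (simp add: mult_le_mono1)
      hence "(p - i) * d \<le> NN" unfolding NN_def by linarith
      hence "n * ((p - i) * d) \<le> n * NN" by (rule mult_le_mono2)
      hence 2: "y < n * NN + c" using h by linarith
      have 3: "x < n * (n0 + j * d) + c \<or> y < n * ((p - j) * d) + c" if "j < p" for j
      proof (cases "j \<le> i")
        case True
        have "n * ((p - i) * d) \<le> n * ((p - j) * d)" using True
          by (intro mult_le_mono2 mult_le_mono1) simp
        thus ?thesis using h by linarith
      next
        case False
        hence "n * (n0 + Suc i * d) \<le> n * (n0 + j * d)" by (intro mono_a) simp
        thus ?thesis using h by linarith
      qed
      show ?thesis unfolding xy PP_def using 1 2 3 h by auto
    qed
  qed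
qed

lemma PP_card: "card (PP n c) = card (B0 n c) + (\<Sum>i<p. card (Bi n c i))"
proof -
  have d1: "B0 n c \<inter> (\<Union>i<p. Bi n c i) = {}"
  proof -
    have "B0 n c \<inter> Bi n c i = {}" for i
    proof (rule equals0I)
      fix s assume s: "s \<in> B0 n c \<inter> Bi n c i"
      obtain x y where xy: "s = (x, y)" by (cases s)
      have "x < n * n0 + c" "n * (n0 + i * d) + c \<le> x" using s unfolding xy B0_def Bi_def blk_def by auto
      moreover have "n * n0 \<le> n * (n0 + i * d)" using mono_a[of 0 i n] by simp
      ultimately show False by linarith
    qed
    thus ?thesis by blast
  qed
  have d2: "Bi n c i \<inter> Bi n c j = {}" if "i \<noteq> j" for i j
  proof -
    have "Bi n c i \<inter> Bi n c j = {}" if "i < j" for i j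
    proof (rule equals0I)
      fix s assume s: "s \<in> Bi n c i \<inter> Bi n c j"
      obtain x y where xy: "s = (x, y)" by (cases s)
      have "x < n * (n0 + Suc i * d) + c" "n * (n0 + j * d) + c \<le> x"
        using s unfolding xy Bi_def blk_def by auto
      moreover have "n * (n0 + Suc i * d) \<le> n * (n0 + j * d)" using that by (intro mono_a) simp
      ultimately show False by linarith
    qed
    thus ?thesis using \<open>i \<noteq> j\<close> by (metis Int_commute linorder_neqE_nat)
  qed
  have "card (B0 n c \<union> (\<Union>i<p. Bi n c i)) = card (B0 n c) + card (\<Union>i<p. Bi n c i)"
  proof (rule card_Un_disjoint)
    show "finite (B0 n c)" unfolding B0_def by (rule blk_finite)
    have "\<And>i. finite (Bi n c i)" unfolding Bi_def by (rule blk_finite)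
    thus "finite (\<Union>i<p. Bi n c i)" by blast
  qed (rule d1)
  also have "card (\<Union>i<p. Bi n c i) = (\<Sum>i<p. card (Bi n c i))"
  proof (rule card_UN_disjoint)
    show "\<forall>i\<in>{..<p}. finite (Bi n c i)" unfolding Bi_def using blk_finite by blast
    show "\<forall>i\<in>{..<p}. \<forall>j\<in>{..<p}. i \<noteq> j \<longrightarrow> Bi n c i \<inter> Bi n c j = {}" using d2 by blast
  qed simp
  finally show ?thesis using PP_blocks by simp
qed

lemma width: "n * (n0 + Suc i * d) + c - (n * (n0 + i * d) + c) = n * d"
  by (simp add: algebra_simps)

lemma PP_upper: "real NN * real (card (PP n c)) \<le>
   real (n * n0 + c) * (real (n * NN + c) + real NN) + (\<Sum>i<p. real (n * d) * (real (n * ((p - i) * d) + c) + real NN))"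
proof -
  have "real NN * real (card (PP n c)) = real NN * real (card (B0 n c)) + (\<Sum>i<p. real NN * real (card (Bi n c i)))"
    unfolding PP_card by (simp add: distrib_left sum_distrib_left)
  also have "\<dots> \<le> real (n * n0 + c) * (real (n * NN + c) + real NN) + (\<Sum>i<p. real (n * d) * (real (n * ((p - i) * d) + c) + real NN))"
  proof (rule add_mono)
    show "real NN * real (card (B0 n c)) \<le> real (n * n0 + c) * (real (n * NN + c) + real NN)"
      using blk_count[OF NNpos, of "n * n0 + c" 0 "n * NN + c"] unfolding B0_def by simp
    show "(\<Sum>i<p. real NN * real (card (Bi n c i))) \<le> (\<Sum>i<p. real (n * d) * (real (n * ((p - i) * d) + c) + real NN))"
    proof (rule sum_mono)
      fix i show "real NN * real (card (Bi n c i)) \<le> real (n * d) * (real (n * ((p - i) * d) + c) + real NN)"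
        using blk_count[OF NNpos, of "n * (n0 + Suc i * d) + c" "n * (n0 + i * d) + c" "n * ((p - i) * d) + c", THEN conjunct2]
        unfolding Bi_def width .
    qed
  qed
  finally show ?thesis .
qed

lemma PP_lower: "real (n * n0) * (real (n * NN) - real NN) + (\<Sum>i<p. real (n * d) * (real (n * ((p - i) * d)) - real NN))
   \<le> real NN * real (card (PP n 0))"
proof -
  have "real NN * real (card (PP n 0)) = real NN * real (card (B0 n 0)) + (\<Sum>i<p. real NN * real (card (Bi n 0 i)))"
    unfolding PP_card by (simp add: distrib_left sum_distrib_left)
  moreover have "real (n * n0) * (real (n * NN) - real NN) + (\<Sum>i<p. real (n * d) * (real (n * ((p - i) * d)) - real NN))
     \<le> real NN * real (card (B0 n 0)) + (\<Sum>i<p. real NN * real (card (Bi n 0 i)))"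
  proof (rule add_mono)
    show "real (n * n0) * (real (n * NN) - real NN) \<le> real NN * real (card (B0 n 0))"
      using blk_count[OF NNpos, of "n * n0" 0 "n * NN"] unfolding B0_def by simp
    show "(\<Sum>i<p. real (n * d) * (real (n * ((p - i) * d)) - real NN)) \<le> (\<Sum>i<p. real NN * real (card (Bi n 0 i)))"
    proof (rule sum_mono)
      fix i show "real (n * d) * (real (n * ((p - i) * d)) - real NN) \<le> real NN * real (card (Bi n 0 i))"
        using blk_count[OF NNpos, of "n * (n0 + Suc i * d) + 0" "n * (n0 + i * d) + 0" "n * ((p - i) * d) + 0", THEN conjunct1]
        unfolding Bi_def width by simp
    qed
  qed
  ultimately show ?thesis by simp
qed

end

context hkl begin

definition "Lval = real n0 + real (p * (p + 1) * d ^ 2) / (2 * real NN)"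

lemma NNL: "real NN * Lval = real n0 * real NN + real p * (real p + 1) * real d ^ 2 / 2"
  using NNpos unfolding Lval_def by (simp add: field_simps)

lemma rNN: "real NN = real n0 + real p * real d" unfolding NN_def by simp

lemma term_alg: "real (n * d) * (real n * r * real d + real c + real NN)
   = (real n ^ 2 * real d ^ 2) * r + real n * real d * (real c + real NN)"
  by (simp add: algebra_simps power2_eq_square)

lemma term_alg0: "real (n * d) * (real n * r * real d - real NN)
   = (real n ^ 2 * real d ^ 2) * r - real n * real d * real NN"
  by (simp add: algebra_simps power2_eq_square)

lemma sumS: "(\<Sum>i<p. real (n * d) * (real (n * ((p - i) * d) + c) + real NN))
   = real n ^ 2 * real d ^ 2 * (real p * (real p + 1) / 2) + real n * real d * real p * (real c + real NN)"
proof -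
  have "(\<Sum>i<p. real (n * d) * (real (n * ((p - i) * d) + c) + real NN))
      = (\<Sum>i<p. (real n ^ 2 * real d ^ 2) * real (p - i) + real n * real d * (real c + real NN))"
  proof (rule sum.cong)
    fix i
    have eqc: "real (n * ((p - i) * d) + c) = real n * real (p - i) * real d + real c"
      by (simp only: of_nat_add of_nat_mult mult.assoc)
    show "real (n * d) * (real (n * ((p - i) * d) + c) + real NN) =
      (real n ^ 2 * real d ^ 2) * real (p - i) + real n * real d * (real c + real NN)"
      by (subst eqc) (rule term_alg)
  qed simp
  also have "\<dots> = (real n ^ 2 * real d ^ 2) * (\<Sum>i<p. real (p - i)) + real p * (real n * real d * (real c + real NN))"
    by (simp only: sum.distrib sum_distrib_left[symmetric] sum_constant card_lessThan) (simp add: algebra_simps)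
  finally show ?thesis unfolding sum_pi by simp
qed

lemma sumS0: "(\<Sum>i<p. real (n * d) * (real (n * ((p - i) * d)) - real NN))
   = real n ^ 2 * real d ^ 2 * (real p * (real p + 1) / 2) - real n * real d * real p * real NN"
proof -
  have "(\<Sum>i<p. real (n * d) * (real (n * ((p - i) * d)) - real NN))
      = (\<Sum>i<p. (real n ^ 2 * real d ^ 2) * real (p - i) - real n * real d * real NN)"
  proof (rule sum.cong)
    fix i
    have "real (n * ((p - i) * d)) = real n * real (p - i) * real d"
      by (simp only: of_nat_add of_nat_mult mult.assoc)
    thus "real (n * d) * (real (n * ((p - i) * d)) - real NN) =
      (real n ^ 2 * real d ^ 2) * real (p - i) - real n * real d * real NN"
      by (simp only: term_alg0)
  qed simp
  also have "\<dots> = (real n ^ 2 * real d ^ 2) * (\<Sum>i<p. real (p - i)) - real p * (real n * real d * real NN)"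
    by (simp only: sum_subtractf sum_distrib_left[symmetric] sum_constant card_lessThan) (simp add: mult_ac)
  finally show ?thesis unfolding sum_pi by simp
qed

definition "R1 = real n0 * (real cc + real NN) + real cc * real NN + real d * real p * (real cc + real NN)
   + real cc * (real cc + real NN)"
definition "KK = R1 / real NN + real NN + real cc * real NN"

lemma upper: assumes n: "1 \<le> n" shows "real (card (EE n)) \<le> Lval * real n ^ 2 + KK * real n"
proof -
  define rn where "rn = real n"
  have rn1: "1 \<le> rn" using n unfolding rn_def by simp
  have X: "real NN * real (card (PP n cc)) \<le>
     (rn * real n0 + real cc) * (rn * real NN + real cc + real NN)
     + rn ^ 2 * real d ^ 2 * (real p * (real p + 1) / 2) + rn * real d * real p * (real cc + real NN)"
    using PP_upper[of n cc] unfolding sumS rn_def by simp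
  have eq: "(rn * real n0 + real cc) * (rn * real NN + real cc + real NN)
     + rn ^ 2 * real d ^ 2 * (real p * (real p + 1) / 2) + rn * real d * real p * (real cc + real NN)
     = (real n0 * real NN + real p * (real p + 1) * real d ^ 2 / 2) * rn ^ 2 + (rn * (real n0 * (real cc + real NN) + real cc * real NN + real d * real p * (real cc + real NN))
        + real cc * (real cc + real NN))"
    by (simp add: algebra_simps power2_eq_square)
  have "0 \<le> real cc * (real cc + real NN)" by simp
  from mult_right_mono[OF rn1 this]
  have "real cc * (real cc + real NN) \<le> rn * (real cc * (real cc + real NN))" by simp
  hence "rn * (real n0 * (real cc + real NN) + real cc * real NN + real d * real p * (real cc + real NN))
        + real cc * (real cc + real NN) \<le> rn * R1" unfolding R1_def by (simp add: algebra_simps)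
  hence "real NN * real (card (PP n cc)) \<le> real NN * Lval * rn ^ 2 + rn * R1" using X eq unfolding NNL by linarith
  hence "real (card (PP n cc)) \<le> Lval * rn ^ 2 + rn * R1 / real NN"
    using NNpos by (simp add: field_simps)
  moreover have "rn * R1 / real NN \<le> KK * rn"
  proof -
    have "0 \<le> real NN + real cc * real NN" by simp
    hence "R1 / real NN \<le> KK" unfolding KK_def by linarith
    hence "rn * (R1 / real NN) \<le> rn * KK" by (rule mult_left_mono) (use rn1 in simp)
    thus ?thesis by (simp add: mult.commute)
  qed
  moreover have "real (card (EE n)) \<le> real (card (PP n cc))" using EE_upper by simp
  ultimately show ?thesis unfolding rn_def by linarith
qed

lemma lower: assumes n: "1 \<le> n" shows "Lval * real n ^ 2 - KK * real n \<le> real (card (EE n))"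
proof -
  define rn where "rn = real n"
  have rn1: "1 \<le> rn" using n unfolding rn_def by simp
  have X: "rn * real n0 * (rn * real NN - real NN) + (rn ^ 2 * real d ^ 2 * (real p * (real p + 1) / 2) - rn * real d * real p * real NN)
      \<le> real NN * real (card (PP n 0))"
    using PP_lower[of n] unfolding sumS0 rn_def by simp
  have eq: "rn * real n0 * (rn * real NN - real NN) + (rn ^ 2 * real d ^ 2 * (real p * (real p + 1) / 2) - rn * real d * real p * real NN)
     = (real n0 * real NN + real p * (real p + 1) * real d ^ 2 / 2) * rn ^ 2 - rn * real NN * (real n0 + real p * real d)"
    by (simp add: algebra_simps power2_eq_square)
  also have "\<dots> = real NN * (Lval * rn ^ 2 - rn * real NN)"
    unfolding rNN[symmetric] right_diff_distrib NNL[symmetric] by (simp add: algebra_simps)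
  finally have eq2: "rn * real n0 * (rn * real NN - real NN) + (rn ^ 2 * real d ^ 2 * (real p * (real p + 1) / 2) - rn * real d * real p * real NN)
     = real NN * (Lval * rn ^ 2 - rn * real NN)" .
  have "real NN * (Lval * rn ^ 2 - rn * real NN) \<le> real NN * real (card (PP n 0))" using X eq2 by simp
  hence P: "Lval * rn ^ 2 - rn * real NN \<le> real (card (PP n 0))" using NNpos by simp
  have E: "real (card (PP n 0)) - real ((c1 + c2) * (n * NN)) \<le> real (card (EE n))" by (rule EE_lower)
  have "real ((c1 + c2) * (n * NN)) = rn * (real cc * real NN)" unfolding rn_def cc_def by simp
  hence "Lval * rn ^ 2 - rn * (real NN + real cc * real NN) \<le> real (card (EE n))" using P E by (simp add: algebra_simps)
  moreover have "rn * (real NN + real cc * real NN) \<le> KK * rn"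
  proof -
    have "0 \<le> R1" unfolding R1_def by simp
    hence "real NN + real cc * real NN \<le> KK" unfolding KK_def using NNpos by simp
    thus ?thesis using rn1 by (simp add: mult.commute mult_left_mono)
  qed
  ultimately show ?thesis unfolding rn_def by linarith
qed

lemma main: "has_eHK2 GG Lval"
  unfolding has_eHK2_def hk_EE
proof (rule tendsto_sandwich)
  show "\<forall>\<^sub>F n in sequentially. Lval - KK / real n \<le> real (card (EE n)) / real n ^ 2"
  proof (rule eventually_sequentiallyI[of 1])
    fix n :: nat assume n: "1 \<le> n"
    hence pos: "0 < real n" by simp
    have "Lval - KK / real n = (Lval * real n ^ 2 - KK * real n) / real n ^ 2"
      using pos by (simp add: field_simps power2_eq_square)
    also have "\<dots> \<le> real (card (EE n)) / real n ^ 2"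
      using lower[OF n] pos by (intro divide_right_mono) simp_all
    finally show "Lval - KK / real n \<le> real (card (EE n)) / real n ^ 2" .
  qed
  show "\<forall>\<^sub>F n in sequentially. real (card (EE n)) / real n ^ 2 \<le> Lval + KK / real n"
  proof (rule eventually_sequentiallyI[of 1])
    fix n :: nat assume n: "1 \<le> n"
    hence pos: "0 < real n" by simp
    have "real (card (EE n)) / real n ^ 2 \<le> (Lval * real n ^ 2 + KK * real n) / real n ^ 2"
      using upper[OF n] pos by (intro divide_right_mono) simp_all
    also have "\<dots> = Lval + KK / real n"
      using pos by (simp add: field_simps power2_eq_square)
    finally show "real (card (EE n)) / real n ^ 2 \<le> Lval + KK / real n" .
  qed
  show "(\<lambda>n. Lval - KK / real n) \<longlonglongrightarrow> Lval"
    using tendsto_diff[OF tendsto_const lim_const_over_n[of KK]] by simp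
  show "(\<lambda>n. Lval + KK / real n) \<longlonglongrightarrow> Lval"
    using tendsto_add[OF tendsto_const lim_const_over_n[of KK]] by simp
qed

end

theorem corollary5p2:
  fixes n0 d p :: nat
  assumes "p \<ge> 1" and "n0 > 0" and "d > 0"
    and "Gcd ((\<lambda>i. n0 + i * d) ` {0..p}) = 1"
    and "minimally_generates ((\<lambda>i. n0 + i * d) ` {0..p})"
  shows "has_eHK2
           (insert (0, n0 + p * d)
              ((\<lambda>i. (n0 + i * d, (n0 + p * d) - (n0 + i * d))) ` {0..p}))
           (real n0 + real (p * (p + 1) * d ^ 2) / (2 * real (n0 + p * d)))"
proof -
  have "gcd n0 d dvd Gcd ((\<lambda>i. n0 + i * d) ` {0..p})"
    by (rule Gcd_greatest) (auto intro!: dvd_add dvd_mult)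
  hence "gcd n0 d = 1" using assms(4) by simp
  hence cop: "coprime n0 d" by (simp add: coprime_iff_gcd_eq_1)
  interpret hkl n0 d p using assms cop by unfold_locales auto
  show ?thesis using main unfolding GG_def NN_def Lval_def .
qed

end
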